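(* With $Q,g,\eta,V,L,\mathcal D,\mathbb FL,H,H_c$ as in the context, for every $q\in Q$ and every $\beta_q\in\mathbb{F}L(\mathcal D)_q=\mathbb FL(\mathcal D_q)$ one has $dH(\beta_q)=d(H_c\circ i_{\mathcal D}^* )(\beta_q)$.
   Context: $Q$ is a smooth manifold with Riemannian metric $g$, $1$-form $\eta$ and $V\in C^\infty(Q)$; $L(v_q)=\tfrac12g_q(v_q,v_q)+\langle\eta(q),v_q\rangle-V(q)$. $\mathcal D\subset TQ$ is a smooth distribution of constant rank $r\ge2$, $\mathcal D^\perp$ its $g$-orthogonal complement, $i_{\mathcal D}:\mathcal D\hookrightarrow TQ$ the inclusion. $\mathcal D^*$ is identified with $\flat_g(\mathcal D)\subset T^*Q$ and $(\mathcal D^\perp)^*$ with $\mathcal D^\circ$, so $T^*Q=\mathcal D^*\oplus(\mathcal D^\perp)^*$, and $i_{\mathcal D}^*:T^*Q\to\mathcal D^*$ is the projection along $(\mathcal D^\perp)^*$. $\mathbb FL:TQ\to T^*Q$ is the fibre derivative of $L$ (equal to $\flat_g+\eta\circ\tau_Q$), $E_L(v_q)=\tfrac12 g(v_q,v_q)+V(q)$, $H=E_L\circ(\mathbb FL)^{-1}$; $\mathbb FL_c:\mathcal D\to\mathcal D^*$ is the fibre derivative of $L\circ i_{\mathcal D}$, and $H_c=(E_L\circ i_{\mathcal D})\circ(\mathbb FL_c)^{-1}\in C^\infty(\mathcal D^* )$. *)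

theory Defs
  imports "HOL-Analysis.Analysis"
begin

text \<open>Local-coordinate model. The configuration manifold Q is modelled by an open
  set U of the Euclidean space real^'n (a chart domain); TQ and T*Q are U x real^'n,
  a covector p acting on a vector v by the inner product p \<bullet> v.\<close>

text \<open>C^k and C^infinity maps on an open set (iterated Frechet derivatives).\<close>
fun Ck_on :: "nat \<Rightarrow> 'a::real_normed_vector set \<Rightarrow> ('a \<Rightarrow> 'b::real_normed_vector) \<Rightarrow> bool" where
  "Ck_on 0 S f = continuous_on S f"
| "Ck_on (Suc k) S f =
     ((\<forall>x\<in>S. f differentiable (at x)) \<and>
      (\<forall>v. Ck_on k S (\<lambda>x. frechet_derivative f (at x) v)))"

definition smooth_on :: "'a::real_normed_vector set \<Rightarrow> ('a \<Rightarrow> 'b::real_normed_vector) \<Rightarrow> bool" where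
  "smooth_on S f \<longleftrightarrow> (\<forall>k. Ck_on k S f)"

text \<open>Riemannian metric on U, given by its Gram matrix field.\<close>
definition riemannian_metric :: "(real^'n) set \<Rightarrow> (real^'n \<Rightarrow> real^'n^'n) \<Rightarrow> bool" where
  "riemannian_metric U g \<longleftrightarrow>
     smooth_on U g \<and>
     (\<forall>q\<in>U. transpose (g q) = g q \<and> (\<forall>v. v \<noteq> 0 \<longrightarrow> v \<bullet> (g q *v v) > 0))"

text \<open>Smooth distribution of constant rank r: each fibre is an r-dimensional subspace,
  and locally D is spanned by r smooth vector fields.\<close>
definition smooth_distribution :: "(real^'n) set \<Rightarrow> (real^'n \<Rightarrow> (real^'n) set) \<Rightarrow> nat \<Rightarrow> bool" where
  "smooth_distribution U D r \<longleftrightarrow>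
     (\<forall>q\<in>U. subspace (D q) \<and> dim (D q) = r) \<and>
     (\<forall>q\<in>U. \<exists>W. open W \<and> q \<in> W \<and> W \<subseteq> U \<and>
        (\<exists>X :: nat \<Rightarrow> real^'n \<Rightarrow> real^'n.
           (\<forall>i<r. smooth_on W (X i)) \<and>
           (\<forall>x\<in>W. D x = span ((\<lambda>i. X i x) ` {..<r}))))"

text \<open>Lagrangian L(v_q) = 1/2 g(v,v) + <eta(q),v> - V(q).\<close>
definition lagr :: "(real^'n \<Rightarrow> real^'n^'n) \<Rightarrow> (real^'n \<Rightarrow> real^'n) \<Rightarrow> (real^'n \<Rightarrow> real)
    \<Rightarrow> (real^'n) \<times> (real^'n) \<Rightarrow> real" where
  "lagr g eta V = (\<lambda>(q, v). (1/2) * (v \<bullet> (g q *v v)) + eta q \<bullet> v - V q)"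

text \<open>Energy E_L(v_q) = 1/2 g(v,v) + V(q).\<close>
definition energy :: "(real^'n \<Rightarrow> real^'n^'n) \<Rightarrow> (real^'n \<Rightarrow> real) \<Rightarrow> (real^'n) \<times> (real^'n) \<Rightarrow> real" where
  "energy g V = (\<lambda>(q, v). (1/2) * (v \<bullet> (g q *v v)) + V q)"

text \<open>Fibre derivative FL = flat_g + eta o tau_Q.\<close>
definition legendre :: "(real^'n \<Rightarrow> real^'n^'n) \<Rightarrow> (real^'n \<Rightarrow> real^'n)
    \<Rightarrow> (real^'n) \<times> (real^'n) \<Rightarrow> (real^'n) \<times> (real^'n)" where
  "legendre g eta = (\<lambda>(q, v). (q, g q *v v + eta q))"

text \<open>H = E_L o (FL)^{-1} on T*Q = U x real^'n.\<close>
definition hamiltonian :: "(real^'n) set \<Rightarrow> (real^'n \<Rightarrow> real^'n^'n) \<Rightarrow> (real^'n \<Rightarrow> real^'n)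
    \<Rightarrow> (real^'n \<Rightarrow> real) \<Rightarrow> (real^'n) \<times> (real^'n) \<Rightarrow> real" where
  "hamiltonian U g eta V = energy g V \<circ> the_inv_into (U \<times> UNIV) (legendre g eta)"

text \<open>The total space of D, of D^* = flat_g(D) and the annihilator D^circ = (D^perp)^*.\<close>
definition dbundle :: "(real^'n) set \<Rightarrow> (real^'n \<Rightarrow> (real^'n) set) \<Rightarrow> ((real^'n) \<times> (real^'n)) set" where
  "dbundle U D = {(q, v). q \<in> U \<and> v \<in> D q}"

definition dstar_fib :: "(real^'n \<Rightarrow> real^'n^'n) \<Rightarrow> (real^'n \<Rightarrow> (real^'n) set) \<Rightarrow> real^'n \<Rightarrow> (real^'n) set" where
  "dstar_fib g D q = (\<lambda>v. g q *v v) ` D q"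

definition dstar_bundle :: "(real^'n) set \<Rightarrow> (real^'n \<Rightarrow> real^'n^'n) \<Rightarrow> (real^'n \<Rightarrow> (real^'n) set)
    \<Rightarrow> ((real^'n) \<times> (real^'n)) set" where
  "dstar_bundle U g D = {(q, a). q \<in> U \<and> a \<in> dstar_fib g D q}"

definition annih :: "(real^'n \<Rightarrow> (real^'n) set) \<Rightarrow> real^'n \<Rightarrow> (real^'n) set" where
  "annih D q = {p. \<forall>v\<in>D q. p \<bullet> v = 0}"

text \<open>i_D^*: projection of T*Q onto D^* along D^circ.\<close>
definition iDstar :: "(real^'n \<Rightarrow> real^'n^'n) \<Rightarrow> (real^'n \<Rightarrow> (real^'n) set)
    \<Rightarrow> (real^'n) \<times> (real^'n) \<Rightarrow> (real^'n) \<times> (real^'n)" where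
  "iDstar g D = (\<lambda>(q, p). (q, THE a. a \<in> dstar_fib g D q \<and> p - a \<in> annih D q))"

text \<open>FL_c: fibre derivative of L o i_D, the functional w |-> d/dt L(v + t w) at t = 0
  on D_q, represented by its (unique) representative in D^*_q = flat_g(D_q).\<close>
definition legendre_c :: "(real^'n \<Rightarrow> real^'n^'n) \<Rightarrow> (real^'n \<Rightarrow> real^'n) \<Rightarrow> (real^'n \<Rightarrow> real)
    \<Rightarrow> (real^'n \<Rightarrow> (real^'n) set) \<Rightarrow> (real^'n) \<times> (real^'n) \<Rightarrow> (real^'n) \<times> (real^'n)" where
  "legendre_c g eta V D = (\<lambda>(q, v). (q, THE a. a \<in> dstar_fib g D q \<and>
      (\<forall>w\<in>D q. ((\<lambda>t. lagr g eta V (q, v + t *\<^sub>R w)) has_real_derivative (a \<bullet> w)) (at 0))))"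

text \<open>H_c = (E_L o i_D) o (FL_c)^{-1} on D^*.\<close>
definition hamiltonian_c :: "(real^'n) set \<Rightarrow> (real^'n \<Rightarrow> real^'n^'n) \<Rightarrow> (real^'n \<Rightarrow> real^'n)
    \<Rightarrow> (real^'n \<Rightarrow> real) \<Rightarrow> (real^'n \<Rightarrow> (real^'n) set) \<Rightarrow> (real^'n) \<times> (real^'n) \<Rightarrow> real" where
  "hamiltonian_c U g eta V D =
     energy g V \<circ> the_inv_into (dbundle U D) (legendre_c g eta V D)"

end

theory Submission
  imports Defs
begin

lemma sym_dot:
  fixes G :: "real^'n^'n"
  assumes "transpose G = G"
  shows "x \<bullet> (G *v y) = (G *v x) \<bullet> y"
  by (metis assms dot_lmul_matrix transpose_matrix_vector)

lemma decomp:
  fixes G :: "real^'n^'n" and S :: "(real^'n) set"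
  assumes sym: "transpose G = G" and pd: "\<forall>v. v \<noteq> 0 \<longrightarrow> v \<bullet> (G *v v) > 0"
    and sS: "subspace S"
  shows "\<exists>!a. a \<in> (\<lambda>v. G *v v) ` S \<and> p - a \<in> {p. \<forall>v\<in>S. p \<bullet> v = 0}"
proof -
  define GS where "GS = (\<lambda>v. G *v v) ` S"
  define A where "A = {p. \<forall>v\<in>S. p \<bullet> v = 0}"
  have A': "A = {y \<in> UNIV. \<forall>x\<in>S. orthogonal x y}"
    unfolding A_def orthogonal_def by (auto simp: inner_commute)
  have sGS: "subspace GS" unfolding GS_def
    by (intro linear_subspace_image sS) simp
  have sA: "subspace A" unfolding A' by (simp add: subspace_orthogonal_to_vectors)
  have linG: "linear ((*v) G)" by simp
  have "\<forall>x. G *v x = 0 \<longrightarrow> x = 0" using pd by (metis inner_zero_right less_irrefl)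
  then have injG: "inj (\<lambda>v. G *v v)" using linear_injective_0[OF linG] by auto
  have int0: "GS \<inter> A \<subseteq> {0}"
  proof
    fix a assume "a \<in> GS \<inter> A"
    then obtain w where w: "w \<in> S" "a = G *v w" and aA: "\<forall>v\<in>S. a \<bullet> v = 0"
      unfolding GS_def A_def by auto
    have "w \<bullet> (G *v w) = 0" using aA w sym_dot[OF sym, of w w] by (simp add: inner_commute)
    then have "w = 0" using pd by (metis less_irrefl)
    then show "a \<in> {0}" using w by simp
  qed
  have dGS: "dim GS = dim S" unfolding GS_def
    by (rule dim_image_eq) (use injG sS in \<open>auto simp: inj_on_def\<close>)
  have dA: "dim A + dim S = dim (UNIV :: (real^'n) set)"
    unfolding A' by (rule dim_subspace_orthogonal_to_vectors) (auto simp: sS)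
  have "GS \<inter> A = {0}" using int0 sGS sA subspace_0 by blast
  then have "dim {x + y |x y. x \<in> GS \<and> y \<in> A} = dim (UNIV :: (real^'n) set)"
    using dim_sums_Int[OF sGS sA] dGS dA by simp
  then have "dim {x + y |x y. x \<in> GS \<and> y \<in> A} = DIM(real^'n)" by simp
  then have "span {x + y |x y. x \<in> GS \<and> y \<in> A} = UNIV"
    using dim_eq_full by blast
  moreover have "subspace {x + y |x y. x \<in> GS \<and> y \<in> A}"
    using subspace_sums[OF sGS sA] by simp
  moreover have "span {x + y |x y. x \<in> GS \<and> y \<in> A} = {x + y |x y. x \<in> GS \<and> y \<in> A}"
    using calculation(2) by (rule span_eq_iff[THEN iffD2])
  ultimately have "{x + y |x y. x \<in> GS \<and> y \<in> A} = UNIV" by simp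
  then have "p \<in> {x + y |x y. x \<in> GS \<and> y \<in> A}" by simp
  then obtain a n where an: "a \<in> GS" "n \<in> A" "p = a + n" by auto
  show ?thesis
  proof (rule ex1I[of _ a])
    show "a \<in> (\<lambda>v. G *v v) ` S \<and> p - a \<in> {p. \<forall>v\<in>S. p \<bullet> v = 0}"
      using an unfolding GS_def A_def by auto
  next
    fix b assume b: "b \<in> (\<lambda>v. G *v v) ` S \<and> p - b \<in> {p. \<forall>v\<in>S. p \<bullet> v = 0}"
    have "a - b \<in> GS" using b an sGS unfolding GS_def by (simp add: subspace_diff)
    moreover have "a - b \<in> A"
    proof -
      have "p - b \<in> A" "p - a \<in> A" using b an unfolding A_def by auto
      then have "(p - b) - (p - a) \<in> A" using sA by (metis subspace_diff)
      then show ?thesis by simp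
    qed
    ultimately show "b = a" using int0 by auto
  qed
qed


lemma bb_mv: "bounded_bilinear (\<lambda>(A::real^'n^'n) (x::real^'n). A *v x)"
proof -
  have "bilinear (\<lambda>(A::real^'n^'n) (x::real^'n). A *v x)"
    unfolding bilinear_def
  proof (intro conjI allI)
    fix x :: "real^'n" show "linear (\<lambda>A::real^'n^'n. A *v x)"
      by (rule linearI) (auto simp: matrix_vector_mult_add_rdistrib scaleR_matrix_vector_assoc)
  next
    fix A :: "real^'n^'n" show "linear (\<lambda>x. A *v x)" by simp
  qed
  then show ?thesis by (simp add: bilinear_conv_bounded_bilinear)
qed

lemma lagr_line:
  assumes sym: "transpose (g q) = g q"
  shows "((\<lambda>t. lagr g eta V (q, v + t *\<^sub>R w)) has_real_derivative ((g q *v v + eta q) \<bullet> w)) (at 0)"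
proof -
  define G where "G = g q"
  have symG: "\<And>x y. x \<bullet> (G *v y) = (G *v x) \<bullet> y" using sym_dot[of G] sym G_def by simp
  have eq: "(\<lambda>t. lagr g eta V (q, v + t *\<^sub>R w)) =
     (\<lambda>t. ((1/2) * (v \<bullet> (G *v v)) + eta q \<bullet> v - V q) + t * ((G *v v + eta q) \<bullet> w)
          + t^2 * ((1/2) * (w \<bullet> (G *v w))))"
  proof
    fix t
    have "(v + t *\<^sub>R w) \<bullet> (G *v (v + t *\<^sub>R w)) =
       v \<bullet> (G *v v) + 2 * t * ((G *v v) \<bullet> w) + t^2 * (w \<bullet> (G *v w))"
      using symG[of w v]
      by (simp add: matrix_vector_right_distrib matrix_vector_mult_scaleR inner_add_left
          inner_add_right power2_eq_square algebra_simps inner_commute)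
    then show "lagr g eta V (q, v + t *\<^sub>R w) = ((1/2) * (v \<bullet> (G *v v)) + eta q \<bullet> v - V q) + t * ((G *v v + eta q) \<bullet> w)
          + t^2 * ((1/2) * (w \<bullet> (G *v w)))"
      unfolding lagr_def by (simp add: G_def inner_add_left inner_add_right algebra_simps)
  qed
  show ?thesis unfolding eq G_def[symmetric]
    by (auto intro!: derivative_eq_intros)
qed

lemma span_combo:
  fixes f :: "nat \<Rightarrow> 'a::real_vector"
  assumes "x \<in> span (f ` {..<r})"
  shows "\<exists>c. x = (\<Sum>i<r. c i *\<^sub>R f i)"
  using assms
proof (induction rule: span_induct_alt)
  case base
  then show ?case by (rule exI[of _ "\<lambda>_. 0"]) simp
next
  case (step a x y)
  then obtain c where c: "y = (\<Sum>i<r. c i *\<^sub>R f i)" by blast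
  from step obtain j where j: "j < r" "x = f j" by auto
  show ?case
  proof (rule exI[of _ "\<lambda>i. c i + (if i = j then a else 0)"])
    have "(\<Sum>i<r. (c i + (if i = j then a else 0)) *\<^sub>R f i) =
        (\<Sum>i<r. c i *\<^sub>R f i) + (\<Sum>i<r. (if i = j then a *\<^sub>R f i else 0))"
      by (subst sum.distrib[symmetric], rule sum.cong) (auto simp: scaleR_add_left)
    also have "\<dots> = y + a *\<^sub>R x" using j c by (simp add: sum.delta)
    finally show "a *\<^sub>R x + y = (\<Sum>i<r. (c i + (if i = j then a else 0)) *\<^sub>R f i)" by simp
  qed
qed


lemma quad_bound:
  fixes G :: "real^'n^'n"
  assumes sym: "transpose G = G" and psd: "\<forall>x. 0 \<le> x \<bullet> (G *v x)"
    and sS: "subspace S" and vc: "vc \<in> S" and w: "w \<in> S"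
    and orth: "\<forall>x\<in>S. (G *v (vH - vc)) \<bullet> x = 0"
  shows "0 \<le> vH \<bullet> (G *v vH) - vc \<bullet> (G *v vc) \<and>
         vH \<bullet> (G *v vH) - vc \<bullet> (G *v vc) \<le> (vH - w) \<bullet> (G *v (vH - w))"
proof -
  define m where "m = vH - vc"
  define z where "z = vc - w"
  have zS: "z \<in> S" unfolding z_def using sS vc w by (simp add: subspace_diff)
  have symG: "\<And>x y. x \<bullet> (G *v y) = (G *v x) \<bullet> y" using sym_dot[OF sym] by simp
  have o1: "(G *v m) \<bullet> vc = 0" using orth vc m_def by simp
  have o2: "(G *v m) \<bullet> z = 0" using orth zS m_def by simp
  have vH: "vH = vc + m" unfolding m_def by simp
  have e1: "vH \<bullet> (G *v vH) - vc \<bullet> (G *v vc) = m \<bullet> (G *v m)"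
  proof -
    have a1: "vc \<bullet> (G *v m) = 0" using o1 by (simp add: inner_commute)
    have a2: "m \<bullet> (G *v vc) = 0" using o1 symG[of m vc] by simp
    show ?thesis unfolding vH
      by (simp add: matrix_vector_right_distrib inner_add_left inner_add_right a1 a2)
  qed
  have vw: "vH - w = m + z" unfolding m_def z_def by simp
  have e2: "(vH - w) \<bullet> (G *v (vH - w)) = m \<bullet> (G *v m) + z \<bullet> (G *v z)"
  proof -
    have a1: "z \<bullet> (G *v m) = 0" using o2 by (simp add: inner_commute)
    have a2: "m \<bullet> (G *v z) = 0" using o2 symG[of m z] by simp
    show ?thesis unfolding vw
      by (simp add: matrix_vector_right_distrib inner_add_left inner_add_right a1 a2)
  qed
  show ?thesis unfolding e1 e2 using psd by (simp add: add_increasing2)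
qed


theorem lemma3p3:
  fixes U :: "(real^'n) set"
    and g :: "real^'n \<Rightarrow> real^'n^'n"
    and eta :: "real^'n \<Rightarrow> real^'n"
    and V :: "real^'n \<Rightarrow> real"
    and D :: "real^'n \<Rightarrow> (real^'n) set"
    and r :: nat
    and q v :: "real^'n"
  assumes "open U"
    and "riemannian_metric U g"
    and "smooth_on U eta"
    and "smooth_on U V"
    and "smooth_distribution U D r"
    and "r \<ge> 2"
    and "q \<in> U"
    and "v \<in> D q"
  shows "\<exists>dH. (hamiltonian U g eta V has_derivative dH) (at (legendre g eta (q, v))) \<and>
               ((hamiltonian_c U g eta V D \<circ> iDstar g D) has_derivative dH) (at (legendre g eta (q, v)))"
proof -
  note oU = assms(1) and qU = assms(7) and vD = assms(8)
  have sym: "\<And>x. x \<in> U \<Longrightarrow> transpose (g x) = g x"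
    and pd: "\<And>x y. x \<in> U \<Longrightarrow> y \<noteq> 0 \<Longrightarrow> y \<bullet> (g x *v y) > 0"
    using assms(2) unfolding riemannian_metric_def by auto
  have psd: "\<And>x y. x \<in> U \<Longrightarrow> 0 \<le> y \<bullet> (g x *v y)"
    by (metis order_refl less_imp_le pd inner_zero_left)
  have injG: "\<And>x a b. x \<in> U \<Longrightarrow> g x *v a = g x *v b \<Longrightarrow> a = b"
  proof -
    fix x a b assume x: "x \<in> U" and e: "g x *v a = g x *v b"
    then have "g x *v (a - b) = 0" by (simp add: matrix_vector_mult_diff_distrib)
    then show "a = b" using pd[OF x, of "a - b"] by auto
  qed
  have invG: "\<And>x. x \<in> U \<Longrightarrow> \<exists>B. g x ** B = mat 1"
  proof -
    fix x assume x: "x \<in> U"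
    have "inj ((*v) (g x))" using injG[OF x] by (auto simp: inj_def)
    then obtain B where "B ** g x = mat 1" using matrix_left_invertible_injective by blast
    then show "\<exists>B. g x ** B = mat 1" using matrix_left_right_inverse by blast
  qed
  have surjG: "\<And>x y. x \<in> U \<Longrightarrow> \<exists>a. g x *v a = y"
  proof -
    fix x y assume x: "x \<in> U"
    obtain B where "g x ** B = mat 1" using invG[OF x] by blast
    then have "g x *v (B *v y) = y" by (simp add: matrix_vector_mul_assoc)
    then show "\<exists>a. g x *v a = y" by blast
  qed
  have gsm: "smooth_on U g" using assms(2) unfolding riemannian_metric_def by auto
  have gdiff: "\<And>x. x \<in> U \<Longrightarrow> g differentiable (at x)" and gcont: "continuous_on U g"
    using gsm unfolding smooth_on_def by (metis Ck_on.simps(2), metis Ck_on.simps(1))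
  have etadiff: "\<And>x. x \<in> U \<Longrightarrow> eta differentiable (at x)" and etacont: "continuous_on U eta"
    using assms(3) unfolding smooth_on_def by (metis Ck_on.simps(2), metis Ck_on.simps(1))
  have Vdiff: "\<And>x. x \<in> U \<Longrightarrow> V differentiable (at x)"
    using assms(4) unfolding smooth_on_def by (metis Ck_on.simps(2))
  have subD: "\<And>x. x \<in> U \<Longrightarrow> subspace (D x)"
    using assms(5) unfolding smooth_distribution_def by auto
  obtain W X where W: "open W" "q \<in> W" "W \<subseteq> U"
    and Xsm: "\<And>i. i < r \<Longrightarrow> smooth_on W (X i)"
    and Xspan: "\<And>x. x \<in> W \<Longrightarrow> D x = span ((\<lambda>i. X i x) ` {..<r})"
    using assms(5) qU unfolding smooth_distribution_def by metis

  \<comment> \<open>The Legendre map and its inverse\<close>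
  define Phi where "Phi = legendre g eta"
  define S where "S = U \<times> (UNIV :: (real^'n) set)"
  define Psi where "Psi = the_inv_into S Phi"
  have Phi_eq: "\<And>a b. Phi (a, b) = (a, g a *v b + eta a)" by (simp add: Phi_def legendre_def)
  have injPhi: "inj_on Phi S"
  proof (rule inj_onI)
    fix x y assume x: "x \<in> S" and y: "y \<in> S" and e: "Phi x = Phi y"
    obtain a b where ab: "x = (a, b)" by fastforce
    obtain c d where cd: "y = (c, d)" by fastforce
    have ac: "a = c" using e ab cd Phi_eq by simp
    have "g a *v b = g a *v d" using e ab cd Phi_eq ac by simp
    then have "b = d" using injG x ab S_def by auto
    then show "x = y" using ab cd ac by simp
  qed
  have PsiPhi: "\<And>x. x \<in> S \<Longrightarrow> Psi (Phi x) = x"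
    unfolding Psi_def using injPhi by (simp add: the_inv_into_f_f)
  have Psi_eq: "\<And>a b p. a \<in> U \<Longrightarrow> g a *v b + eta a = p \<Longrightarrow> Psi (a, p) = (a, b)"
    unfolding Psi_def using injPhi by (intro the_inv_into_f_eq) (auto simp: Phi_eq S_def)
  have oS: "open S" unfolding S_def using oU by (simp add: open_Times)
  have qvS: "(q, v) \<in> S" unfolding S_def using qU by simp
  have Phi_fun: "Phi = (\<lambda>x. (fst x, g (fst x) *v snd x + eta (fst x)))"
    by (auto simp: Phi_eq)
  have contPhi: "continuous_on S Phi"
  proof -
    have c1: "continuous_on S (\<lambda>x. g (fst x))"
      by (rule continuous_on_compose2[OF gcont continuous_on_fst[OF continuous_on_id]])
         (auto simp: S_def)
    have c2: "continuous_on S (\<lambda>x. eta (fst x))"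
      by (rule continuous_on_compose2[OF etacont continuous_on_fst[OF continuous_on_id]])
         (auto simp: S_def)
    have c3: "continuous_on S (\<lambda>x. g (fst x) *v snd x)"
      using bounded_bilinear.continuous_on[OF bb_mv c1 continuous_on_snd[OF continuous_on_id]]
      by simp
    show ?thesis unfolding Phi_fun
      by (intro continuous_on_Pair continuous_on_add c3 c2 continuous_on_fst continuous_on_id)
  qed
  define g' where "g' = frechet_derivative g (at q)"
  define eta' where "eta' = frechet_derivative eta (at q)"
  have gder: "(g has_derivative g') (at q)" unfolding g'_def using gdiff[OF qU] frechet_derivative_works by blast
  have etader: "(eta has_derivative eta') (at q)" unfolding eta'_def using etadiff[OF qU] frechet_derivative_works by blast
  have gfst: "\<And>z::(real^'n) \<times> (real^'n). fst z = q \<Longrightarrow> ((\<lambda>x. g (fst x)) has_derivative (\<lambda>h. g' (fst h))) (at z)"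
  proof -
    fix z :: "(real^'n) \<times> (real^'n)" assume "fst z = q"
    then have "(g has_derivative g') (at (fst z))" using gder by simp
    from diff_chain_at[OF has_derivative_fst[OF has_derivative_ident] this]
    show "((\<lambda>x. g (fst x)) has_derivative (\<lambda>h. g' (fst h))) (at z)" by (simp add: o_def)
  qed
  have etafst: "\<And>z::(real^'n) \<times> (real^'n). fst z = q \<Longrightarrow> ((\<lambda>x. eta (fst x)) has_derivative (\<lambda>h. eta' (fst h))) (at z)"
  proof -
    fix z :: "(real^'n) \<times> (real^'n)" assume "fst z = q"
    then have "(eta has_derivative eta') (at (fst z))" using etader by simp
    from diff_chain_at[OF has_derivative_fst[OF has_derivative_ident] this]
    show "((\<lambda>x. eta (fst x)) has_derivative (\<lambda>h. eta' (fst h))) (at z)" by (simp add: o_def)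
  qed
  define Phi' where "Phi' = (\<lambda>h::(real^'n) \<times> (real^'n). (fst h, g' (fst h) *v v + g q *v snd h + eta' (fst h)))"
  have Phider: "(Phi has_derivative Phi') (at (q, v))"
  proof -
    have m: "((\<lambda>x. g (fst x) *v snd x) has_derivative (\<lambda>h. g q *v snd h + g' (fst h) *v v)) (at (q, v))"
      using bounded_bilinear.FDERIV[OF bb_mv gfst[of "(q, v)"] has_derivative_snd[OF has_derivative_ident]]
      by simp
    have "((\<lambda>x. (fst x, g (fst x) *v snd x + eta (fst x))) has_derivative
            (\<lambda>h. (fst h, (g q *v snd h + g' (fst h) *v v) + eta' (fst h)))) (at (q, v))"
      by (intro has_derivative_Pair has_derivative_add m etafst has_derivative_fst has_derivative_ident) simp
    then show ?thesis unfolding Phi_fun Phi'_def by (simp add: algebra_simps)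
  qed
  obtain B where B: "g q ** B = mat 1" using invG[OF qU] by blast
  define Psi' where "Psi' = (\<lambda>h::(real^'n) \<times> (real^'n). (fst h, B *v (snd h - g' (fst h) *v v - eta' (fst h))))"
  have PhiPsi': "Phi' \<circ> Psi' = id"
    by (rule ext) (simp add: Phi'_def Psi'_def matrix_vector_mul_assoc B)
  define beta where "beta = Phi (q, v)"
  have beta_eq: "beta = (q, g q *v v + eta q)" by (simp add: beta_def Phi_eq)
  have Psider: "(Psi has_derivative Psi') (at beta)"
    unfolding beta_def
    by (rule has_derivative_inverse_strong[OF oS qvS contPhi PsiPhi Phider PhiPsi'])
  have Psibeta: "Psi beta = (q, v)" unfolding beta_def using PsiPhi qvS by simp
  \<comment> \<open>Derivative of H\<close>
  have E_fun: "energy g V = (\<lambda>x. (1/2) * (snd x \<bullet> (g (fst x) *v snd x)) + V (fst x))"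
    by (auto simp: energy_def)
  define V' where "V' = frechet_derivative V (at q)"
  have Vder: "(V has_derivative V') (at q)" unfolding V'_def using Vdiff[OF qU] frechet_derivative_works by blast
  have Vfst: "((\<lambda>x. V (fst x)) has_derivative (\<lambda>h. V' (fst h))) (at (q, v))"
  proof -
    have "(V has_derivative V') (at (fst (q, v)))" using Vder by simp
    from diff_chain_at[OF has_derivative_fst[OF has_derivative_ident] this]
    show ?thesis by (simp add: o_def)
  qed
  have "\<exists>E'. (energy g V has_derivative E') (at (q, v))"
  proof -
    have m: "((\<lambda>x. g (fst x) *v snd x) has_derivative (\<lambda>h. g q *v snd h + g' (fst h) *v v)) (at (q, v))"
      using bounded_bilinear.FDERIV[OF bb_mv gfst[of "(q, v)"] has_derivative_snd[OF has_derivative_ident]]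
      by simp
    have "((\<lambda>x. (1/2) * (snd x \<bullet> (g (fst x) *v snd x)) + V (fst x)) has_derivative
       (\<lambda>h. (1/2) * (snd (q, v) \<bullet> (g q *v snd h + g' (fst h) *v v) + snd h \<bullet> (g (fst (q, v)) *v snd (q, v)))
          + V' (fst h))) (at (q, v))"
      by (intro has_derivative_add has_derivative_mult_right has_derivative_inner m Vfst
          has_derivative_snd has_derivative_ident)
    then show ?thesis unfolding E_fun by blast
  qed
  then obtain E' where Eder: "(energy g V has_derivative E') (at (q, v))" by blast
  define H where "H = hamiltonian U g eta V"
  have H_def': "H = energy g V \<circ> Psi" unfolding H_def hamiltonian_def Psi_def S_def Phi_def by simp
  have Hder: "(H has_derivative (E' \<circ> Psi')) (at beta)"
    unfolding H_def' using diff_chain_at[OF Psider] Eder Psibeta by simp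

  \<comment> \<open>Algebraic description of the constrained side\<close>
  define P where "P y x = (THE a. a \<in> dstar_fib g D y \<and> x - a \<in> annih D y)" for y x
  have ex1: "\<And>y x. y \<in> U \<Longrightarrow> \<exists>!a. a \<in> dstar_fib g D y \<and> x - a \<in> annih D y"
  proof -
    fix y x assume y: "y \<in> U"
    have "\<forall>v. v \<noteq> 0 \<longrightarrow> v \<bullet> (g y *v v) > 0" using pd[OF y] by blast
    from decomp[OF sym[OF y] this subD[OF y], of x]
    show "\<exists>!a. a \<in> dstar_fib g D y \<and> x - a \<in> annih D y"
      unfolding dstar_fib_def annih_def by simp
  qed
  have Pchar: "\<And>y x. y \<in> U \<Longrightarrow> P y x \<in> dstar_fib g D y \<and> x - P y x \<in> annih D y"
    unfolding P_def by (rule theI') (rule ex1)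
  have Puniq: "\<And>y x a. y \<in> U \<Longrightarrow> a \<in> dstar_fib g D y \<Longrightarrow> x - a \<in> annih D y \<Longrightarrow> P y x = a"
  proof -
    fix y x a assume y: "y \<in> U" and a1: "a \<in> dstar_fib g D y" and a2: "x - a \<in> annih D y"
    show "P y x = a" unfolding P_def by (rule the1_equality[OF ex1[OF y]]) (use a1 a2 in simp)
  qed
  have iD: "\<And>y p. iDstar g D (y, p) = (y, P y p)" by (simp add: iDstar_def P_def)
  have legc: "\<And>y u. y \<in> U \<Longrightarrow> legendre_c g eta V D (y, u) = (y, P y (g y *v u + eta y))"
  proof -
    fix y u assume y: "y \<in> U"
    have iff: "(a \<in> dstar_fib g D y \<and> (\<forall>w\<in>D y. ((\<lambda>t. lagr g eta V (y, u + t *\<^sub>R w)) has_real_derivative (a \<bullet> w)) (at 0)))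
       \<longleftrightarrow> (a \<in> dstar_fib g D y \<and> (g y *v u + eta y) - a \<in> annih D y)" for a
    proof -
      have "((\<lambda>t. lagr g eta V (y, u + t *\<^sub>R w)) has_real_derivative (a \<bullet> w)) (at 0)
             \<longleftrightarrow> ((g y *v u + eta y) - a) \<bullet> w = 0" for w
      proof
        assume "((\<lambda>t. lagr g eta V (y, u + t *\<^sub>R w)) has_real_derivative (a \<bullet> w)) (at 0)"
        then have "a \<bullet> w = (g y *v u + eta y) \<bullet> w"
          using DERIV_unique lagr_line[of g y eta V u w, OF sym[OF y]] by blast
        then show "((g y *v u + eta y) - a) \<bullet> w = 0" by (simp add: inner_diff_left)
      next
        assume "((g y *v u + eta y) - a) \<bullet> w = 0"
        then have "a \<bullet> w = (g y *v u + eta y) \<bullet> w" by (simp add: inner_diff_left)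
        then show "((\<lambda>t. lagr g eta V (y, u + t *\<^sub>R w)) has_real_derivative (a \<bullet> w)) (at 0)"
          using lagr_line[of g y eta V u w, OF sym[OF y]] by simp
      qed
      then show ?thesis unfolding annih_def by auto
    qed
    show "legendre_c g eta V D (y, u) = (y, P y (g y *v u + eta y))"
      unfolding legendre_c_def P_def using iff by simp
  qed
  have annih_diff: "\<And>y a b. a \<in> annih D y \<Longrightarrow> b \<in> annih D y \<Longrightarrow> a - b \<in> annih D y"
    unfolding annih_def by (simp add: inner_diff_left)
  have annih_add: "\<And>y a b. a \<in> annih D y \<Longrightarrow> b \<in> annih D y \<Longrightarrow> a + b \<in> annih D y"
    unfolding annih_def by (simp add: inner_add_left)
  have annih_neg: "\<And>y a. a \<in> annih D y \<Longrightarrow> - a \<in> annih D y"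
    unfolding annih_def by simp
  have injc: "inj_on (legendre_c g eta V D) (dbundle U D)"
  proof (rule inj_onI)
    fix x z assume x: "x \<in> dbundle U D" and z: "z \<in> dbundle U D"
      and e: "legendre_c g eta V D x = legendre_c g eta V D z"
    obtain y1 u1 where xe: "x = (y1, u1)" "y1 \<in> U" "u1 \<in> D y1" using x unfolding dbundle_def by auto
    obtain y2 u2 where ze: "z = (y2, u2)" "y2 \<in> U" "u2 \<in> D y2" using z unfolding dbundle_def by auto
    have yy: "y1 = y2" using e xe ze legc by simp
    define b where "b = P y1 (g y1 *v u1 + eta y1)"
    have b2: "b = P y1 (g y1 *v u2 + eta y1)" using e xe ze legc yy b_def by simp
    have "(g y1 *v u1 + eta y1 - b) - (g y1 *v u2 + eta y1 - b) \<in> annih D y1"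
      using Pchar[OF xe(2)] b_def b2 annih_diff by metis
    then have o: "g y1 *v (u1 - u2) \<in> annih D y1" by (simp add: matrix_vector_mult_diff_distrib)
    have "u1 - u2 \<in> D y1" using subD[OF xe(2)] xe ze yy by (simp add: subspace_diff)
    then have "(g y1 *v (u1 - u2)) \<bullet> (u1 - u2) = 0" using o unfolding annih_def by blast
    then have "(u1 - u2) \<bullet> (g y1 *v (u1 - u2)) = 0" by (simp add: inner_commute)
    then have "u1 = u2" using pd[OF xe(2), of "u1 - u2"] by (cases "u1 - u2 = 0") auto
    then show "x = z" using xe ze yy by simp
  qed
  define F where "F = hamiltonian_c U g eta V D \<circ> iDstar g D"
  have key: "\<And>y p w. y \<in> U \<Longrightarrow> w \<in> D y \<Longrightarrow>
     0 \<le> H (y, p) - F (y, p) \<and>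
     H (y, p) - F (y, p) \<le> (1/2) * ((snd (Psi (y, p)) - w) \<bullet> (g y *v (snd (Psi (y, p)) - w)))"
  proof -
    fix y p w assume y: "y \<in> U" and w: "w \<in> D y"
    obtain vH where vH: "g y *v vH = p - eta y" using surjG[OF y] by blast
    have PsiH: "Psi (y, p) = (y, vH)" by (rule Psi_eq[OF y]) (simp add: vH)
    have Hy: "H (y, p) = (1/2) * (vH \<bullet> (g y *v vH)) + V y"
      unfolding H_def' using PsiH by (simp add: energy_def)
    define a where "a = P y p"
    have a: "a \<in> dstar_fib g D y" "p - a \<in> annih D y" using Pchar[OF y] a_def by auto
    have b: "P y (a - eta y) \<in> dstar_fib g D y" "(a - eta y) - P y (a - eta y) \<in> annih D y"
      using Pchar[OF y] by auto
    then obtain vc where vc: "vc \<in> D y" "P y (a - eta y) = g y *v vc" unfolding dstar_fib_def by auto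
    have "(g y *v vc + eta y) - a = - ((a - eta y) - g y *v vc)" by simp
    then have "(g y *v vc + eta y) - a \<in> annih D y" using annih_neg b(2) vc(2) by metis
    then have Pa: "P y (g y *v vc + eta y) = a" using Puniq[OF y a(1)] by blast
    have lc: "legendre_c g eta V D (y, vc) = (y, a)" using legc[OF y] Pa by simp
    have inv: "the_inv_into (dbundle U D) (legendre_c g eta V D) (y, a) = (y, vc)"
      by (rule the_inv_into_f_eq[OF injc lc]) (simp add: dbundle_def y vc)
    have Fy: "F (y, p) = (1/2) * (vc \<bullet> (g y *v vc)) + V y"
      unfolding F_def hamiltonian_c_def using iD[of y p] a_def inv by (simp add: energy_def)
    have "g y *v (vH - vc) = (p - a) + ((a - eta y) - g y *v vc)"
      by (simp add: matrix_vector_mult_diff_distrib vH)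
    then have "g y *v (vH - vc) \<in> annih D y" using annih_add a(2) b(2) vc(2) by metis
    then have orth: "\<forall>x\<in>D y. (g y *v (vH - vc)) \<bullet> x = 0" unfolding annih_def by blast
    show "0 \<le> H (y, p) - F (y, p) \<and>
     H (y, p) - F (y, p) \<le> (1/2) * ((snd (Psi (y, p)) - w) \<bullet> (g y *v (snd (Psi (y, p)) - w)))"
      using quad_bound[OF sym[OF y] _ subD[OF y] vc(1) w orth] psd[OF y] Hy Fy PsiH by auto
  qed

  \<comment> \<open>Comparison function built from the local frame\<close>
  have "v \<in> span ((\<lambda>i. X i q) ` {..<r})" using vD Xspan[OF W(2)] by simp
  then obtain c where c: "v = (\<Sum>i<r. c i *\<^sub>R X i q)" using span_combo by blast
  define wf where "wf y = (\<Sum>i<r. c i *\<^sub>R X i y)" for y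
  have wfD: "\<And>y. y \<in> W \<Longrightarrow> wf y \<in> D y"
  proof -
    fix y assume y: "y \<in> W"
    have "wf y \<in> span ((\<lambda>i. X i y) ` {..<r})"
      unfolding wf_def by (intro span_sum span_scale span_base) auto
    then show "wf y \<in> D y" using Xspan[OF y] by simp
  qed
  have Xdiff: "\<And>i. i < r \<Longrightarrow> X i differentiable (at q)"
    using Xsm W(2) unfolding smooth_on_def by (metis Ck_on.simps(2))
  have "wf differentiable (at q)"
  proof -
    have "(\<lambda>y. \<Sum>i<r. c i *\<^sub>R X i y) differentiable (at q)"
      by (intro differentiable_sum ballI differentiable_scaleR differentiable_const)
         (auto intro: Xdiff)
    then show ?thesis unfolding wf_def[abs_def] .
  qed
  then obtain w' where wder: "(wf has_derivative w') (at q)" unfolding differentiable_def by blast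
  have fstbeta: "fst beta = q" using beta_eq by simp
  have wfst: "((\<lambda>x. wf (fst x)) has_derivative (\<lambda>h. w' (fst h))) (at beta)"
  proof -
    have "(wf has_derivative w') (at (fst beta))" using wder fstbeta by simp
    from diff_chain_at[OF has_derivative_fst[OF has_derivative_ident] this]
    show ?thesis by (simp add: o_def)
  qed
  define e where "e x = snd (Psi x) - wf (fst x)" for x
  have eder: "(e has_derivative (\<lambda>h. snd (Psi' h) - w' (fst h))) (at beta)"
    unfolding e_def[abs_def] by (intro has_derivative_diff has_derivative_snd Psider wfst)
  have ebeta: "e beta = 0" unfolding e_def using Psibeta fstbeta c wf_def by simp
  define phi where "phi x = e x \<bullet> (g (fst x) *v e x)" for x
  have phider: "(phi has_derivative (\<lambda>_. 0)) (at beta)"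
  proof -
    have "(phi has_derivative (\<lambda>h. e beta \<bullet> (g (fst beta) *v (snd (Psi' h) - w' (fst h)) + g' (fst h) *v e beta)
        + (snd (Psi' h) - w' (fst h)) \<bullet> (g (fst beta) *v e beta))) (at beta)"
      unfolding phi_def[abs_def]
      by (rule has_derivative_inner[OF eder bounded_bilinear.FDERIV[OF bb_mv gfst[OF fstbeta] eder]])
    then show ?thesis by (rule has_derivative_eq_rhs) (simp add: ebeta)
  qed
  have phibeta: "phi beta = 0" unfolding phi_def ebeta by simp
  define fd where "fd x = H x - F x" for x
  have near: "\<And>x. x \<in> W \<times> UNIV \<Longrightarrow> 0 \<le> fd x \<and> fd x \<le> (1/2) * phi x"
  proof -
    fix x :: "(real^'n) \<times> (real^'n)" assume x: "x \<in> W \<times> UNIV"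
    obtain y p where xe: "x = (y, p)" by fastforce
    have y: "y \<in> W" using x xe by simp
    have "y \<in> U" using y W(3) by blast
    from key[OF this wfD[OF y], of p]
    show "0 \<le> fd x \<and> fd x \<le> (1/2) * phi x" unfolding fd_def phi_def e_def xe by simp
  qed
  have betaW: "beta \<in> W \<times> UNIV" using fstbeta W(2) by (cases beta) auto
  have fdbeta: "fd beta = 0" using near[OF betaW] phibeta by simp
  have oWU: "open (W \<times> (UNIV :: (real^'n) set))" using W(1) by (simp add: open_Times)
  have fdder: "(fd has_derivative (\<lambda>_. 0)) (at beta)"
    unfolding has_derivative_iff_norm
  proof
    show "bounded_linear (\<lambda>_::(real^'n) \<times> (real^'n). 0::real)" by simp
  next
    have L: "((\<lambda>y. norm (phi y) / norm (y - beta)) \<longlongrightarrow> 0) (at beta)"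
      using phider unfolding has_derivative_iff_norm by (simp add: phibeta)
    have ev: "eventually (\<lambda>y. norm (norm (fd y - fd beta - 0) / norm (y - beta)) \<le> norm (phi y) / norm (y - beta)) (at beta)"
      unfolding eventually_at_topological
    proof (intro exI conjI ballI impI)
      show "open (W \<times> (UNIV :: (real^'n) set))" by (rule oWU)
      show "beta \<in> W \<times> UNIV" by (rule betaW)
    next
      fix y :: "(real^'n) \<times> (real^'n)" assume y: "y \<in> W \<times> UNIV"
      have h: "0 \<le> fd y" "fd y \<le> norm (phi y)" using near[OF y] by auto
      have "norm (norm (fd y - fd beta - 0) / norm (y - beta)) = fd y / norm (y - beta)"
        using h(1) fdbeta by simp
      also have "\<dots> \<le> norm (phi y) / norm (y - beta)"
        using h by (simp add: divide_right_mono)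
      finally show "norm (norm (fd y - fd beta - 0) / norm (y - beta)) \<le> norm (phi y) / norm (y - beta)" .
    qed
    show "((\<lambda>y. norm (fd y - fd beta - 0) / norm (y - beta)) \<longlongrightarrow> 0) (at beta)"
      by (rule Lim_null_comparison[OF ev L])
  qed
  have Ffd: "F = (\<lambda>x. H x - fd x)" unfolding fd_def by simp
  have Fder: "(F has_derivative (E' \<circ> Psi')) (at beta)"
    unfolding Ffd using has_derivative_diff[OF Hder fdder] by (simp add: o_def)
  show ?thesis
    using Hder Fder unfolding H_def F_def beta_def Phi_def by blast
qed

end
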